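(* Let $p\geq 3$ be a prime, $u\in\{1,\ldots,p-1\}$ and $s\geq 2$ an integer. Suppose that $\nu_{p}\big(A_{p,(p-1)(up^s-1)}(m)\big)\leq s$ for all integers $m>up^{s}$. Then for every integer $n>up^{s}$, $$\nu_{p}\big(A_{p,(p-1)(up^s-1)}(pn)\big)=\nu_{p}\big(A_{p,(p-1)(up^s-1)}(pn+1)\big)=\cdots=\nu_{p}\big(A_{p,(p-1)(up^s-1)}(pn+p-1)\big).$$
   Context: For an integer $m\geq 2$ and a positive integer $k$, the integers $A_{m,k}(n)$, $n\in\mathbb{N}=\{0,1,2,\ldots\}$, are defined by the formal power series identity $\prod_{i=0}^{\infty}\big(1-x^{m^{i}}\big)^{-k}=\sum_{n=0}^{\infty}A_{m,k}(n)x^{n}$. For a prime $p$, $\nu_p(n)$ denotes the $p$-adic valuation of the integer $n$, with $\nu_p(0)=+\infty$. *)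

theory Defs
  imports "HOL-Computational_Algebra.Computational_Algebra" "HOL-Library.Extended_Nat"
begin

(* Geometric series (1 - x^d)^(-1) = sum_j x^(d*j), over the integers.
   i.e. the inverse of 1 - x^d for d > 0. *)
definition geom :: "nat \<Rightarrow> int fps" where
  "geom d = Abs_fps (\<lambda>j. if d dvd j then 1 else 0)"

(* A_{m,k}(n): coefficient of x^n in prod_{i>=0} (1 - x^(m^i))^(-k).
   Factors with m^i > n are congruent to 1 mod x^(n+1), so for the n-th
   coefficient it suffices to take the finite product over i <= n
   (m >= 2 gives m^i > n for i > n). *)
definition A :: "nat \<Rightarrow> nat \<Rightarrow> nat \<Rightarrow> int" where
  "A m k n = fps_nth (\<Prod>i\<in>{..n}. geom (m ^ i) ^ k) n"

definition nu :: "nat \<Rightarrow> int \<Rightarrow> enat" where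
  "nu p x = (if x = 0 then \<infinity> else enat (multiplicity (int p) x))"

end

theory Submission
  imports Defs
begin

definition sp :: "nat \<Rightarrow> int \<Rightarrow> int fps \<Rightarrow> bool" where
  "sp p M f \<longleftrightarrow> (\<forall>n. \<not> p dvd n \<longrightarrow> M dvd f $ n)"

lemma sp_one: "sp p M 1"
  unfolding sp_def by (auto)

lemma sp_mult:
  assumes "sp p M f" "sp p M g" shows "sp p M (f * g)"
  unfolding sp_def
proof (intro allI impI)
  fix n assume n: "\<not> p dvd n"
  show "M dvd (f * g) $ n" unfolding fps_mult_nth
  proof (rule dvd_sum)
    fix i assume i: "i \<in> {0..n}"
    show "M dvd f $ i * g $ (n - i)"
    proof (cases "p dvd i")
      case True
      then have "\<not> p dvd (n - i)" using n i
        by (metis atLeastAtMost_iff dvd_add le_add_diff_inverse)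
      then show ?thesis using assms(2) unfolding sp_def by simp
    next
      case False
      then show ?thesis using assms(1) unfolding sp_def by simp
    qed
  qed
qed

lemma sp_power: "sp p M f \<Longrightarrow> sp p M (f ^ k)"
  by (induction k) (auto intro: sp_mult sp_one)

lemma sp_prod: "(\<And>i. i \<in> I \<Longrightarrow> sp p M (f i)) \<Longrightarrow> sp p M (prod f I)"
  by (induction I rule: infinite_finite_induct) (auto intro: sp_mult sp_one)

lemma sp_geom: "p dvd d \<Longrightarrow> sp p M (geom d)"
  unfolding sp_def geom_def by (auto dest: dvd_trans)

lemma geom_eq: "d \<ge> 1 \<Longrightarrow> geom d = 1 + fps_X ^ d * geom d"
  unfolding fps_eq_iff
proof
  fix n assume d: "d \<ge> 1"
  show "geom d $ n = (1 + fps_X ^ d * geom d) $ n"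
  proof (cases "n < d")
    case True then show ?thesis using d by (auto simp: fps_X_power_mult_nth geom_def dvd_imp_le)
  next
    case False
    then have "d dvd n \<longleftrightarrow> d dvd (n - d)"
      by (metis dvd_add_triv_right_iff le_add_diff_inverse2 not_less)
    then show ?thesis using False d by (auto simp: fps_X_power_mult_nth geom_def)
  qed
qed

lemma one_plus_pow: "\<exists>H. (1 + fps_X ^ d * G :: int fps) ^ k = 1 + fps_X ^ d * H"
proof (induction k)
  case 0 then show ?case by (intro exI[of _ 0]) simp
next
  case (Suc k)
  then obtain H where H: "(1 + fps_X ^ d * G :: int fps) ^ k = 1 + fps_X ^ d * H" by blast
  show ?case
    by (rule exI[of _ "G + H + fps_X ^ d * G * H"]) (simp only: power_Suc H, simp add: algebra_simps)
qed

lemma trunc_step: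
  assumes "d \<ge> 1" "m < d"
  shows "(f * geom d ^ k) $ m = f $ m"
proof -
  obtain H where H: "geom d ^ k = 1 + fps_X ^ d * H"
    using one_plus_pow[of d "geom d" k] geom_eq[OF assms(1)] by metis
  have "f * geom d ^ k = f + fps_X ^ d * (f * H)" by (simp add: H algebra_simps)
  then show ?thesis using assms by (simp add: fps_X_power_mult_nth)
qed

lemma A_trunc:
  assumes "p \<ge> 2" "m \<le> N"
  shows "A p k m = (\<Prod>i\<in>{..N}. geom (p ^ i) ^ k) $ m"
  using assms(2)
proof (induction N rule: dec_induct)
  case base then show ?case by (simp add: A_def)
next
  case (step N)
  have "N < 2 ^ N" by (rule less_exp)
  moreover have "(2::nat) ^ N \<le> 2 ^ Suc N" by simp
  ultimately have "m < 2 ^ Suc N" using \<open>m \<le> N\<close> by linarith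
  also have "\<dots> \<le> p ^ Suc N" by (rule power_mono[OF assms(1)]) simp
  finally have "m < p ^ Suc N" .
  then have "(\<Prod>i\<in>{..Suc N}. geom (p ^ i) ^ k) $ m = (\<Prod>i\<in>{..N}. geom (p ^ i) ^ k) $ m"
    using assms(1) by (simp add: trunc_step)
  then show ?case using step by simp
qed

lemma geom1_pow: "(geom 1 ^ Suc N) $ n = int ((N + n) choose n)"
proof (induction N arbitrary: n)
  case 0 then show ?case by (simp add: geom_def)
next
  case (Suc N)
  have "(geom 1 ^ Suc (Suc N)) $ n = (geom 1 ^ Suc N * geom 1) $ n"
    by (simp only: power_Suc2)
  also have "\<dots> = (\<Sum>i=0..n. int ((N + i) choose i))"
    unfolding fps_mult_nth Suc by (simp add: geom_def)
  also have "\<dots> = int (\<Sum>i\<le>n. (N + i) choose i)"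
    by (simp add: atLeast0AtMost)
  also have "\<dots> = int ((Suc N + n) choose n)" by (simp add: sum_choose_lower)
  finally show ?case .
qed

lemma one_minus_X_pow: "((1 - fps_X) ^ m :: int fps) $ i = (-1) ^ i * int (m choose i)"
proof (induction m arbitrary: i)
  case 0 then show ?case by simp
next
  case (Suc m)
  have "((1 - fps_X) ^ Suc m :: int fps) = (1 - fps_X) ^ m - fps_X * (1 - fps_X) ^ m"
    by (simp add: algebra_simps)
  then show ?case using Suc by (cases i) (auto simp: algebra_simps)
qed

lemma binom_id: "n * ((N+n) choose N) = Suc N * ((N+n) choose Suc N)"
  by (smt (verit, best) Suc_times_binomial add_Suc add_left_cancel
    add_mult_distrib add_mult_distrib2 binomial_Suc_Suc)

lemma num_fact: "(i::nat) < p \<Longrightarrow> j < p \<Longrightarrow> i \<noteq> j \<Longrightarrow> i \<le> p*n+j \<Longrightarrow> \<not> p dvd (p*n+j-i)"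
  by (metis add_implies_diff dvd_mult2 gcd_nat.eq_iff le_add2
    mod_nat_eqI)

lemma geom1_sp:
  assumes "prime p" shows "sp p (int p ^ s) (geom 1 ^ (p ^ s))"
  unfolding sp_def
proof (intro allI impI)
  fix n assume n: "\<not> p dvd n"
  obtain N where N: "p ^ s = Suc N" using assms
    by (metis gr0_implies_Suc prime_gt_0_nat zero_less_power)
  have "n * ((N+n) choose N) = p ^ s * ((N+n) choose Suc N)" using binom_id[of n N] N by simp
  then have "p ^ s dvd n * ((N+n) choose N)" by (metis dvd_triv_left)
  moreover have "coprime (p ^ s) n" using assms n
    by (simp add: prime_imp_coprime)
  ultimately have "p ^ s dvd ((N+n) choose N)"
    using coprime_dvd_mult_right_iff by blast
  then have "p ^ s dvd ((N+n) choose n)"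
    by (metis add.commute binomial_symmetric le_add2 add_diff_cancel_right')
  then have "int p ^ s dvd int ((N+n) choose n)"
    by (metis of_nat_dvd_iff of_nat_power)
  then show "int p ^ s dvd (geom 1 ^ p ^ s) $ n" unfolding N geom1_pow .
qed

lemma geom1_inv: "geom 1 * (1 - fps_X) = (1 :: int fps)"
  unfolding fps_eq_iff by (auto simp: geom_def algebra_simps)

lemma geom1_inv': "(1 - fps_X) * geom 1 = (1 :: int fps)"
  by (metis geom1_inv mult.commute)

lemma decomp:
  assumes "N \<ge> 1" "u * p ^ s \<ge> 1"
  shows "(\<Prod>i\<in>{..N}. geom (p ^ i) ^ ((p - 1) * (u * p ^ s - 1)))
     = (1 - fps_X) ^ (p - 1) * (geom 1 ^ ((p - 1) * u * p ^ s) *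
        (\<Prod>i\<in>{1..N}. geom (p ^ i) ^ ((p - 1) * (u * p ^ s - 1))))"
proof -
  define k where "k = (p - 1) * (u * p ^ s - 1)"
  define Q where "Q = (\<Prod>i\<in>{1..N}. geom (p ^ i) ^ k)"
  have gen: "a * x = a * (x - 1) + a" if "x \<ge> 1" for a x :: nat
    using that by (cases x) simp_all
  have K: "(p - 1) * u * p ^ s = k + (p - 1)" unfolding k_def using gen[OF assms(2), of "p - 1"]
    by (simp add: mult.assoc)
  have "{..N} = insert 0 {1..N}" by auto
  then have "(\<Prod>i\<in>{..N}. geom (p ^ i) ^ k) = geom 1 ^ k * Q"
    unfolding Q_def by simp
  also have "\<dots> = ((1 - fps_X) * geom 1) ^ (p - 1) * geom 1 ^ k * Q"
    unfolding geom1_inv' by simp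
  also have "\<dots> = (1 - fps_X) ^ (p - 1) * (geom 1 ^ ((p - 1) * u * p ^ s) * Q)"
    unfolding K by (simp only: power_mult_distrib power_add mult_ac)
  finally show ?thesis unfolding k_def Q_def .
qed

lemma coeff_cong:
  assumes "sp p M R" "\<And>i. i \<ge> p \<Longrightarrow> B $ i = 0" "j < p"
  shows "M dvd (B * R) $ (p * n + j) - B $ j * R $ (p * n)"
proof -
  have j: "j \<in> {0..p*n+j}" by simp
  have "(B * R) $ (p * n + j) = B $ j * R $ (p*n+j-j) + (\<Sum>i\<in>{0..p*n+j} - {j}. B $ i * R $ (p*n+j-i))"
    unfolding fps_mult_nth by (rule sum.remove[OF _ j]) simp
  then have eq: "(B * R) $ (p * n + j) - B $ j * R $ (p * n) = (\<Sum>i\<in>{0..p*n+j} - {j}. B $ i * R $ (p*n+j-i))"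
    by simp
  show ?thesis unfolding eq
  proof (rule dvd_sum)
    fix i assume i: "i \<in> {0..p*n+j} - {j}"
    show "M dvd B $ i * R $ (p*n+j-i)"
    proof (cases "i \<ge> p")
      case True then show ?thesis using assms(2) by simp
    next
      case False
      then have "\<not> p dvd (p*n+j-i)" using num_fact[of i p j n] i assms(3) by auto
      then show ?thesis using assms(1) unfolding sp_def by simp
    qed
  qed
qed

lemma mult_eq:
  fixes a b c :: int
  assumes p: "prime p" and "a \<noteq> 0" "b \<noteq> 0" "multiplicity (int p) a \<le> s" "multiplicity (int p) b \<le> s"
    and c: "\<not> int p dvd c" and d: "int p ^ s dvd b - c * a"
  shows "multiplicity (int p) a = multiplicity (int p) b"
proof -
  have pp: "prime (int p)" using p by simp
  have nu: "\<not> is_unit (int p)" using pp not_prime_unit by blast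
  have iff: "int p ^ t dvd a \<longleftrightarrow> int p ^ t dvd b" if t: "t \<le> s" for t
  proof -
    have dt: "int p ^ t dvd b - c * a" using d t by (meson dvd_trans le_imp_power_dvd)
    have cop: "coprime (int p ^ t) c" using pp c
      by (simp add: prime_imp_coprime)
    have "int p ^ t dvd a \<longleftrightarrow> int p ^ t dvd c * a"
      using cop coprime_dvd_mult_right_iff by blast
    also have "\<dots> \<longleftrightarrow> int p ^ t dvd b"
    proof -
      have "b = (b - c * a) + c * a" by simp
      then show ?thesis using dt dvd_add_right_iff by metis
    qed
    finally show ?thesis .
  qed
  have "int p ^ multiplicity (int p) a dvd b"
    using iff[OF assms(4)] multiplicity_dvd[of "int p" a] by blast
  then have 1: "multiplicity (int p) a \<le> multiplicity (int p) b"
    using multiplicity_geI[OF assms(3) nu] by blast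
  have "int p ^ multiplicity (int p) b dvd a"
    using iff[OF assms(5)] multiplicity_dvd[of "int p" b] by blast
  then have 2: "multiplicity (int p) b \<le> multiplicity (int p) a"
    using multiplicity_geI[OF assms(2) nu] by blast
  from 1 2 show ?thesis by simp
qed


lemma not_p_dvd_binom:
  assumes "prime p" "j < p" shows "\<not> p dvd ((p - 1) choose j)"
proof
  assume h: "p dvd ((p - 1) choose j)"
  have "fact j * fact (p - 1 - j) * ((p - 1) choose j) = (fact (p - 1) :: nat)"
    using assms(2) by (intro binomial_fact_lemma) simp
  then have "((p - 1) choose j) dvd fact (p - 1)" by (metis dvd_triv_right)
  with h have "p dvd fact (p - 1)" by (rule dvd_trans)
  then show False using prime_dvd_fact_iff[OF assms(1)] assms(1)
    using prime_gt_0_nat[OF assms(1)] by simp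
qed

theorem theorem3p1:
  fixes p u s :: nat
  assumes "prime p" and "p \<ge> 3"
    and "1 \<le> u" and "u \<le> p - 1"
    and "s \<ge> 2"
    and "\<forall>m::nat. m > u * p ^ s \<longrightarrow> nu p (A p ((p - 1) * (u * p ^ s - 1)) m) \<le> enat s"
  shows "\<forall>n::nat. n > u * p ^ s \<longrightarrow>
    (\<forall>j < p. nu p (A p ((p - 1) * (u * p ^ s - 1)) (p * n + j))
              = nu p (A p ((p - 1) * (u * p ^ s - 1)) (p * n)))"
proof (intro allI impI)
  fix n j assume n: "n > u * p ^ s" and j: "j < p"
  define k where "k = (p - 1) * (u * p ^ s - 1)"
  define N where "N = p * n + p"
  define R where "R = geom 1 ^ ((p - 1) * u * p ^ s) * (\<Prod>i\<in>{1..N}. geom (p ^ i) ^ k)"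
  define B where "B = ((1 - fps_X) ^ (p - 1) :: int fps)"
  define M where "M = int p ^ s"
  have p0: "p > 0" using assms(1) by (simp add: prime_gt_0_nat)
  have up: "u * p ^ s \<ge> 1" using assms(3) p0 by simp
  have N1: "N \<ge> 1" unfolding N_def using p0 by simp
  have PN: "(\<Prod>i\<in>{..N}. geom (p ^ i) ^ k) = B * R"
    unfolding k_def B_def R_def by (rule decomp[OF N1 up])
  have "sp p M (geom 1 ^ ((p - 1) * u * p ^ s))"
  proof -
    have "geom 1 ^ ((p - 1) * u * p ^ s) = (geom 1 ^ (p ^ s)) ^ ((p - 1) * u)"
      by (simp add: power_mult[symmetric] mult_ac)
    then show ?thesis unfolding M_def using sp_power[OF geom1_sp[OF assms(1)]] by simp
  qed
  moreover have "sp p M (\<Prod>i\<in>{1..N}. geom (p ^ i) ^ k)"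
    by (rule sp_prod, rule sp_power, rule sp_geom) auto
  ultimately have spR: "sp p M R" unfolding R_def by (rule sp_mult)
  have B0: "B $ i = 0" if "i \<ge> p" for i
    using that p0 unfolding B_def one_minus_X_pow by simp
  have Bj: "B $ j = (-1) ^ j * int ((p - 1) choose j)" unfolding B_def one_minus_X_pow ..
  have B00: "B $ 0 = 1" unfolding B_def one_minus_X_pow by simp
  have Aj: "A p k (p * n + j) = (B * R) $ (p * n + j)"
    using A_trunc[of p "p * n + j" N k] assms(2) j unfolding PN by (simp add: N_def)
  have A0: "A p k (p * n) = (B * R) $ (p * n)"
    using A_trunc[of p "p * n" N k] assms(2) unfolding PN by (simp add: N_def)
  have c1: "M dvd A p k (p * n + j) - B $ j * R $ (p * n)"
    unfolding Aj by (rule coeff_cong[OF spR B0 j])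
  have c0: "M dvd A p k (p * n) - R $ (p * n)"
    using coeff_cong[OF spR B0 p0, of n] unfolding A0 B00 by simp
  have "A p k (p * n + j) - B $ j * A p k (p * n)
      = (A p k (p * n + j) - B $ j * R $ (p * n)) - B $ j * (A p k (p * n) - R $ (p * n))"
    by (simp add: algebra_simps)
  then have cong: "M dvd A p k (p * n + j) - B $ j * A p k (p * n)"
    using c1 c0 by (metis dvd_diff dvd_mult)
  have ndvd: "\<not> int p dvd B $ j"
  proof
    assume "int p dvd B $ j"
    moreover have "is_unit ((-1::int) ^ j)" by simp
    ultimately have "int p dvd int ((p - 1) choose j)" unfolding Bj
      using dvd_mult_unit_iff' by blast
    then show False using not_p_dvd_binom[OF assms(1) j] by simp
  qed
  have nn: "n \<le> p * n" using p0 by simp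
  have g1: "p * n > u * p ^ s" "p * n + j > u * p ^ s" using n nn by linarith+
  have h0: "nu p (A p k (p * n)) \<le> enat s" using assms(6) g1(1) unfolding k_def by blast
  have h1: "nu p (A p k (p * n + j)) \<le> enat s" using assms(6) g1(2) unfolding k_def by blast
  have a0: "A p k (p * n) \<noteq> 0" "multiplicity (int p) (A p k (p * n)) \<le> s"
    using h0 unfolding nu_def by (auto split: if_splits)
  have a1: "A p k (p * n + j) \<noteq> 0" "multiplicity (int p) (A p k (p * n + j)) \<le> s"
    using h1 unfolding nu_def by (auto split: if_splits)
  have "multiplicity (int p) (A p k (p * n)) = multiplicity (int p) (A p k (p * n + j))"
    by (rule mult_eq[OF assms(1) a0(1) a1(1) a0(2) a1(2) ndvd cong[unfolded M_def]])
  then show "nu p (A p ((p - 1) * (u * p ^ s - 1)) (p * n + j)) = nu p (A p ((p - 1) * (u * p ^ s - 1)) (p * n))"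
    using a0 a1 unfolding k_def[symmetric] nu_def by simp
qed

end
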